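(* Fix $n,d$ and $J=\{j_1<\cdots<j_\ell\}\subseteq[n]$. There exists a path $C\in\mathcal{P}(n,d)$ with $\mathrm{st}(C)=J$ if and only if $j_k\geq 2k$ for all $1\le k\le\ell$ and $\ell\le d\le n-\ell$. Moreover, in this case such a path is unique.
   Context: $\mathcal{P}(n,d)$ is the set of words $C=C_1\cdots C_n$ in letters $\mathbf{e}$ (east step) and $\mathbf{n}$ (north step) with exactly $d$ letters $\mathbf{e}$. For $C\in\mathcal{P}(n,d)$: scan positions left to right and mark position $i$ with $C_i=\mathbf{e}$ if the number of $j<i$ with $C_j=\mathbf{n}$ equals the number of $j<i$ with $C_j=\mathbf{e}$ that are unmarked; $\mathrm{st}(C)$ is the set of unmarked positions $i$ with $C_i=\mathbf{e}$. *)

theory Defs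
  imports Main
begin

datatype step = E | N

definition paths :: "nat \<Rightarrow> nat \<Rightarrow> step list set" where
  "paths n d = {C. length C = n \<and> length (filter (\<lambda>x. x = E) C) = d}"

text \<open>Arguments: remaining word, current (1-based) position p,
  number a of north steps seen so far, number b of unmarked east steps seen so far.
  An east step at position p is marked iff a = b; the result collects the positions
  of unmarked east steps.\<close>
fun st_aux :: "step list \<Rightarrow> nat \<Rightarrow> nat \<Rightarrow> nat \<Rightarrow> nat set" where
  "st_aux [] p a b = {}"
| "st_aux (N # w) p a b = st_aux w (Suc p) (Suc a) b"
| "st_aux (E # w) p a b =
     (if a = b then st_aux w (Suc p) a b else insert p (st_aux w (Suc p) a (Suc b)))"

definition st :: "step list \<Rightarrow> nat set" where
  "st C = st_aux C 1 0 0"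

end

theory Submission
  imports Defs
begin

abbreviation cntN :: "step list \<Rightarrow> nat" where "cntN w \<equiv> length (filter (\<lambda>x. x = N) w)"
abbreviation cntE :: "step list \<Rightarrow> nat" where "cntE w \<equiv> length (filter (\<lambda>x. x = E) w)"


lemma cnt_len': "cntN w + cntE w = length w"
proof (induction w)
  case (Cons x w) then show ?case by (cases x) auto
qed simp

lemma st_aux_range: "st_aux w p a b \<subseteq> {p..<p + length w}"
  by (induction w p a b rule: st_aux.induct) (auto simp: subset_iff, (force)+)

lemma st_aux_N: "st_aux (w @ [N]) p a b = st_aux w p a b"
  by (induction w p a b rule: st_aux.induct) auto

lemma st_aux_E: "st_aux (w @ [E]) p a b =
  (if a + cntN w = b + card (st_aux w p a b) then st_aux w p a b
   else insert (p + length w) (st_aux w p a b))"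
proof (induction w p a b rule: st_aux.induct)
  case (3 w p a b)
  have fin: "finite (st_aux w (Suc p) a (Suc b))"
    by (rule finite_subset[OF st_aux_range]) simp
  have nin: "p \<notin> st_aux w (Suc p) a (Suc b)" using st_aux_range[of w "Suc p" a "Suc b"] by auto
  show ?case using 3 fin nin by auto
qed auto

lemma st_N: "st (w @ [N]) = st w" unfolding st_def by (rule st_aux_N)

lemma st_E: "st (w @ [E]) = (if cntN w = card (st w) then st w else insert (length w + 1) (st w))"
  unfolding st_def using st_aux_E[of w 1 0 0] by simp

lemma st_range: "st w \<subseteq> {1..length w}"
  unfolding st_def using st_aux_range[of w 1 0 0] by auto

lemma st_fin: "finite (st w)"
  using st_range by (rule finite_subset) simp

lemma st_card: "card (st w) \<le> cntN w"
proof (induction w rule: rev_induct)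
  case (snoc x w)
  show ?case
  proof (cases x)
    case E
    have "length w + 1 \<notin> st w" using st_range[of w] by auto
    then show ?thesis using snoc E st_fin[of w] by (auto simp: st_E)
  qed (use snoc st_N in auto)
qed (simp add: st_def)

lemma sl_snoc:
  assumes "finite J" "\<forall>x\<in>J. x < m"
  shows "sorted_list_of_set (insert m J) = sorted_list_of_set J @ [m]"
proof -
  have m: "m \<notin> J" using assms by auto
  have "sorted_wrt (<) (sorted_list_of_set J @ [m]) \<and> set (sorted_list_of_set J @ [m]) = insert m J
     \<and> length (sorted_list_of_set J @ [m]) = card (insert m J)"
    using assms m by (auto simp: sorted_wrt_append)
  moreover have "finite (insert m J)" using assms by simp
  ultimately show ?thesis using sorted_list_of_set_unique[of "insert m J" "sorted_list_of_set J @ [m]"] by blast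
qed

definition cond1 :: "nat set \<Rightarrow> bool" where
  "cond1 J = (\<forall>k\<in>{1..card J}. sorted_list_of_set J ! (k - 1) \<ge> 2 * k)"

lemma cond1_insert:
  assumes "finite J" "\<forall>x\<in>J. x < m"
  shows "cond1 (insert m J) = (cond1 J \<and> m \<ge> 2 * (card J + 1))"
proof -
  have mJ: "m \<notin> J" using assms by auto
  have len: "length (sorted_list_of_set J) = card J" by simp
  have c: "card (insert m J) = card J + 1" using mJ assms by simp
  show ?thesis
    unfolding cond1_def c sl_snoc[OF assms]
  proof (intro iffI conjI ballI)
    fix k assume A: "\<forall>k\<in>{1..card J + 1}. 2 * k \<le> (sorted_list_of_set J @ [m]) ! (k - 1)"
      and k: "k \<in> {1..card J}"
    then have "2 * k \<le> (sorted_list_of_set J @ [m]) ! (k - 1)" by auto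
    moreover have "k - 1 < card J" using k by auto
    ultimately show "2 * k \<le> sorted_list_of_set J ! (k - 1)" using len by (simp add: nth_append)
  next
    assume A: "\<forall>k\<in>{1..card J + 1}. 2 * k \<le> (sorted_list_of_set J @ [m]) ! (k - 1)"
    have "2 * (card J + 1) \<le> (sorted_list_of_set J @ [m]) ! card J"
      using bspec[OF A, of "card J + 1"] by simp
    moreover have "(sorted_list_of_set J @ [m]) ! card J = m" using len by (metis nth_append_length)
    ultimately show "2 * (card J + 1) \<le> m" by simp
  next
    fix k assume A: "(\<forall>k\<in>{1..card J}. 2 * k \<le> sorted_list_of_set J ! (k - 1)) \<and> 2 * (card J + 1) \<le> m"
      and k: "k \<in> {1..card J + 1}"
    show "2 * k \<le> (sorted_list_of_set J @ [m]) ! (k - 1)"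
    proof (cases "k = card J + 1")
      case True then show ?thesis using A len by (simp add: nth_append)
    next
      case False then show ?thesis using A k len by (auto simp: nth_append)
    qed
  qed
qed

lemma nec:
  "length C = n \<Longrightarrow> cntE C = d \<Longrightarrow>
   cond1 (st C) \<and> card (st C) \<le> d \<and> d \<le> n - card (st C)"
proof (induction C arbitrary: n d rule: rev_induct)
  case Nil then show ?case by (simp add: st_def cond1_def)
next
  case (snoc x w)
  have cl: "cntN w + cntE w = length w" by (rule cnt_len')
  have cw: "card (st w) \<le> cntN w" by (rule st_card)
  have IH: "cond1 (st w) \<and> card (st w) \<le> cntE w \<and> cntE w \<le> length w - card (st w)"
    using snoc.IH by simp
  show ?case
  proof (cases x)
    case N then show ?thesis using snoc.prems IH cl cw by (auto simp: st_N)
  next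
    case E
    show ?thesis
    proof (cases "cntN w = card (st w)")
      case True then show ?thesis using E snoc.prems IH cl cw by (auto simp: st_E)
    next
      case False
      have nin: "\<forall>x\<in>st w. x < length w + 1" using st_range[of w] by auto
      have nin2: "length w + 1 \<notin> st w" using nin by auto
      show ?thesis using E False snoc.prems IH cl cw
        cond1_insert[OF st_fin nin] st_fin[of w] nin2 by (auto simp: st_E)
    qed
  qed
qed

lemma suf:
  "J \<subseteq> {1..n} \<Longrightarrow> cond1 J \<Longrightarrow> card J \<le> d \<Longrightarrow> d \<le> n - card J \<Longrightarrow>
   \<exists>C. length C = n \<and> cntE C = d \<and> st C = J"
proof (induction n arbitrary: J d)
  case 0
  then have "J = {}" "d = 0" by auto
  then show ?case by (intro exI[of _ "[]"]) (simp add: st_def)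
next
  case (Suc n)
  have finJ: "finite J" using Suc.prems(1) finite_subset by blast
  show ?case
  proof (cases "Suc n \<in> J")
    case True
    define J' where "J' = J - {Suc n}"
    have JJ: "J = insert (Suc n) J'" using True J'_def by auto
    have lt: "\<forall>x\<in>J'. x < Suc n" using Suc.prems(1) J'_def by auto
    have finJ': "finite J'" using finJ J'_def by simp
    have cJ: "card J = card J' + 1" using True finJ J'_def card_Suc_Diff1 by fastforce
    have c1: "cond1 J' \<and> Suc n \<ge> 2 * (card J' + 1)"
      using Suc.prems(2) cond1_insert[OF finJ' lt] JJ by simp
    have sub: "J' \<subseteq> {1..n}" using Suc.prems(1) J'_def by (auto simp: le_Suc_eq)
    have h1: "card J' \<le> d - 1" using Suc.prems(3) cJ by linarith
    have h2: "d - 1 \<le> n - card J'" using Suc.prems(4) cJ by linarith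
    obtain C where C: "length C = n" "cntE C = d - 1" "st C = J'"
      using Suc.IH[OF sub conjunct1[OF c1] h1 h2] by blast
    have cl: "cntN C + cntE C = length C" by (rule cnt_len')
    have "cntN C \<noteq> card (st C)" using C cl Suc.prems cJ by auto
    then have "st (C @ [E]) = J" using C JJ by (simp add: st_E)
    then show ?thesis using C Suc.prems cJ by (intro exI[of _ "C @ [E]"]) auto
  next
    case False
    have sub: "J \<subseteq> {1..n}" using Suc.prems(1) False by (auto simp: le_Suc_eq)
    show ?thesis
    proof (cases "d \<le> n - card J")
      case True
      obtain C where C: "length C = n" "cntE C = d" "st C = J"
        using Suc.IH[OF sub Suc.prems(2,3) True] by blast
      then show ?thesis by (intro exI[of _ "C @ [N]"]) (simp add: st_N)
    next
      case dF: False
      have d: "d = Suc n - card J" using dF Suc.prems by auto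
      have big: "Suc n > 2 * card J"
      proof (cases "J = {}")
        case False
        define l where "l = card J"
        have l: "l \<ge> 1" using False finJ l_def by (simp add: Suc_leI card_gt_0_iff)
        have sJ: "sorted_list_of_set J ! (l - 1) \<in> J"
          using l l_def finJ by (metis Suc_le_eq diff_less length_sorted_list_of_set less_one
              nth_mem set_sorted_list_of_set zero_less_diff le_less_trans not_less)
        have "2 * l \<le> sorted_list_of_set J ! (l - 1)" using Suc.prems(2) l unfolding cond1_def l_def by auto
        moreover have "sorted_list_of_set J ! (l - 1) \<le> n" using sJ sub by auto
        ultimately show ?thesis using l_def by simp
      qed simp
      have h1: "card J \<le> d - 1" using d big by linarith
      have h2: "d - 1 \<le> n - card J" using d big by linarith
      obtain C where C: "length C = n" "cntE C = d - 1" "st C = J"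
        using Suc.IH[OF sub Suc.prems(2) h1 h2] by blast
      have cl: "cntN C + cntE C = length C" by (rule cnt_len')
      have "cntN C = card (st C)" using C cl d big by auto
      then have "st (C @ [E]) = J" using C by (simp add: st_E)
      then show ?thesis using C d big by (intro exI[of _ "C @ [E]"]) auto
    qed
  qed
qed

lemma uniq:
  "length C1 = length C2 \<Longrightarrow> cntE C1 = cntE C2 \<Longrightarrow> st C1 = st C2 \<Longrightarrow> C1 = C2"
proof (induction C1 arbitrary: C2 rule: rev_induct)
  case Nil then show ?case by simp
next
  case (snoc x w C2)
  obtain u y where C2: "C2 = u @ [y]" using snoc.prems(1)
    by (metis length_0_conv rev_exhaust snoc_eq_iff_butlast)
  have lu: "length u = length w" using snoc.prems(1) C2 by simp
  have clw: "cntN w + cntE w = length w" by (rule cnt_len')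
  have clu: "cntN u + cntE u = length u" by (rule cnt_len')
  have cw: "card (st w) \<le> cntN w" by (rule st_card)
  have cu: "card (st u) \<le> cntN u" by (rule st_card)
  have nw: "length w + 1 \<notin> st w" using st_range[of w] by auto
  have nu: "length w + 1 \<notin> st u" using st_range[of u] lu by auto
  have fw: "finite (st w)" "finite (st u)" by (rule st_fin)+
  have eq: "st (w @ [x]) = st (u @ [y])" using snoc.prems C2 by simp
  have ce: "cntE (w @ [x]) = cntE (u @ [y])" using snoc.prems C2 by simp
  have key: "x = y \<and> st w = st u \<and> cntE w = cntE u"
  proof (cases x; cases y)
    assume "x = N" "y = N" then show ?thesis using eq ce by (simp add: st_N)
  next
    assume xy: "x = N" "y = E"
    show ?thesis
    proof (cases "cntN u = card (st u)")
      case True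
      then show ?thesis using xy eq ce clw clu lu cw by (simp add: st_N st_E)
    next
      case False
      then have "length w + 1 \<in> st (w @ [x])" using xy eq lu by (simp add: st_E)
      then show ?thesis using xy nw by (simp add: st_N)
    qed
  next
    assume xy: "x = E" "y = N"
    show ?thesis
    proof (cases "cntN w = card (st w)")
      case True
      then show ?thesis using xy eq ce clw clu lu cu by (simp add: st_N st_E)
    next
      case False
      then have "length w + 1 \<in> st (w @ [x])" using xy by (simp add: st_E)
      then have "length w + 1 \<in> st (u @ [y])" using eq by simp
      then show ?thesis using xy nu by (simp add: st_N)
    qed
  next
    assume xy: "x = E" "y = E"
    show ?thesis
    proof (cases "cntN w = card (st w)"; cases "cntN u = card (st u)")
      assume "cntN w = card (st w)" "cntN u = card (st u)"
      then show ?thesis using xy eq ce by (simp add: st_E)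
    next
      assume a: "cntN w = card (st w)" "cntN u \<noteq> card (st u)"
      then have "length w + 1 \<in> st (u @ [y])" using xy lu by (simp add: st_E)
      then show ?thesis using xy eq a nw by (simp add: st_E)
    next
      assume a: "cntN w \<noteq> card (st w)" "cntN u = card (st u)"
      then have "length w + 1 \<in> st (w @ [x])" using xy by (simp add: st_E)
      then have "length w + 1 \<in> st (u @ [y])" using eq by simp
      then have False using xy a nu by (simp add: st_E)
      then show ?thesis by blast
    next
      assume a: "cntN w \<noteq> card (st w)" "cntN u \<noteq> card (st u)"
      then have "insert (length w + 1) (st w) = insert (length w + 1) (st u)"
        using xy eq lu by (simp add: st_E)
      then have "st w = st u" using nw nu by (metis insert_ident)
      then show ?thesis using xy ce by simp
    qed
  qed
  then have "w = u" using snoc.IH[of u] lu by simp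
  then show ?case using key C2 by simp
qed

theorem proposition4p14:
  fixes n d :: nat and J :: "nat set"
  assumes "J \<subseteq> {1..n}"
  shows "((\<exists>C\<in>paths n d. st C = J) \<longleftrightarrow>
           ((\<forall>k\<in>{1..card J}. sorted_list_of_set J ! (k - 1) \<ge> 2 * k)
            \<and> card J \<le> d \<and> d \<le> n - card J))
         \<and> (\<forall>C1\<in>paths n d. \<forall>C2\<in>paths n d. st C1 = J \<longrightarrow> st C2 = J \<longrightarrow> C1 = C2)"
proof (intro conjI)
  show "(\<exists>C\<in>paths n d. st C = J) \<longleftrightarrow>
           ((\<forall>k\<in>{1..card J}. sorted_list_of_set J ! (k - 1) \<ge> 2 * k)
            \<and> card J \<le> d \<and> d \<le> n - card J)"
  proof
    assume "\<exists>C\<in>paths n d. st C = J"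
    then obtain C where "C \<in> paths n d" "st C = J" by blast
    then show "(\<forall>k\<in>{1..card J}. sorted_list_of_set J ! (k - 1) \<ge> 2 * k)
              \<and> card J \<le> d \<and> d \<le> n - card J"
      using nec[of C n d] unfolding paths_def cond1_def by auto
  next
    assume "(\<forall>k\<in>{1..card J}. sorted_list_of_set J ! (k - 1) \<ge> 2 * k)
              \<and> card J \<le> d \<and> d \<le> n - card J"
    then show "\<exists>C\<in>paths n d. st C = J"
      using suf[OF assms, of d] unfolding paths_def cond1_def by auto
  qed
  show "\<forall>C1\<in>paths n d. \<forall>C2\<in>paths n d. st C1 = J \<longrightarrow> st C2 = J \<longrightarrow> C1 = C2"
  proof (intro ballI impI)
    fix C1 C2 assume "C1 \<in> paths n d" "C2 \<in> paths n d" "st C1 = J" "st C2 = J"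
    then show "C1 = C2" using uniq[of C1 C2] unfolding paths_def by simp
  qed
qed

end
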